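(* Let $\mathcal{G}=(\vec V,\vec E)$ be a DAG and let $V_i,V_j\in\vec V$ be non-adjacent. Then every independence preserving augmentation $(\vec S_i^+,\vec S_j^+)$ of $(V_i,V_j)$ is disjoint from the immoral descendants of $V_i,V_j$: $\operatorname{\mathbf{IMD}}(V_i,V_j)\cap\vec S_i^+=\emptyset$ and $\operatorname{\mathbf{IMD}}(V_i,V_j)\cap\vec S_j^+=\emptyset$.
   Context: For sets $\vec S_i,\vec S_j\subseteq\vec V\setminus\{V_i,V_j\}$, the ordered pair $(\vec S_i^+,\vec S_j^+)=(\vec S_i\cup\{V_i\},\vec S_j\cup\{V_j\})$ is an independence preserving augmentation (IPA) of $(V_i,V_j)$ if there is a set $\vec C\subset\vec V$ (the IPA conditioning set) such that $\vec S_i^+$ and $\vec S_j^+$ are d-separated by $\vec C$ in $\mathcal{G}$. $\operatorname{\mathbf{CH}}(V)$ denotes the children and $\operatorname{\mathbf{DE}}(V)$ the (strict) descendants of $V$ in $\mathcal{G}$; $\operatorname{\mathbf{CH}}(V_i,V_j)=\operatorname{\mathbf{CH}}(V_i)\cap\operatorname{\mathbf{CH}}(V_j)$ and for a set, $\operatorname{\mathbf{DE}}$ of the set is the union of the descendants. The immoral descendants are $\operatorname{\mathbf{IMD}}(V_i,V_j)=\operatorname{\mathbf{CH}}(V_i,V_j)\cup\operatorname{\mathbf{DE}}(\operatorname{\mathbf{CH}}(V_i,V_j))$. *)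

theory Defs
  imports Main
begin

definition dag :: "'v set \<Rightarrow> ('v \<times> 'v) set \<Rightarrow> bool" where
  "dag V E \<longleftrightarrow> finite V \<and> E \<subseteq> V \<times> V \<and> (\<forall>v. (v, v) \<notin> E\<^sup>+)"

definition adjacent :: "('v \<times> 'v) set \<Rightarrow> 'v \<Rightarrow> 'v \<Rightarrow> bool" where
  "adjacent E a b \<longleftrightarrow> (a, b) \<in> E \<or> (b, a) \<in> E"

definition children :: "('v \<times> 'v) set \<Rightarrow> 'v \<Rightarrow> 'v set" where
  "children E v = {w. (v, w) \<in> E}"

definition descendants :: "('v \<times> 'v) set \<Rightarrow> 'v \<Rightarrow> 'v set" where
  "descendants E v = {w. (v, w) \<in> E\<^sup>+}"

definition descendants_set :: "('v \<times> 'v) set \<Rightarrow> 'v set \<Rightarrow> 'v set" where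
  "descendants_set E A = (\<Union>v\<in>A. descendants E v)"

definition common_children :: "('v \<times> 'v) set \<Rightarrow> 'v \<Rightarrow> 'v \<Rightarrow> 'v set" where
  "common_children E a b = children E a \<inter> children E b"

definition immoral_descendants :: "('v \<times> 'v) set \<Rightarrow> 'v \<Rightarrow> 'v \<Rightarrow> 'v set" where
  "immoral_descendants E a b =
     common_children E a b \<union> descendants_set E (common_children E a b)"

definition is_path :: "'v set \<Rightarrow> ('v \<times> 'v) set \<Rightarrow> 'v list \<Rightarrow> bool" where
  "is_path V E p \<longleftrightarrow> p \<noteq> [] \<and> distinct p \<and> set p \<subseteq> V \<and>
     (\<forall>k. Suc k < length p \<longrightarrow> adjacent E (p ! k) (p ! Suc k))"

definition collider :: "('v \<times> 'v) set \<Rightarrow> 'v list \<Rightarrow> nat \<Rightarrow> bool" where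
  "collider E p k \<longleftrightarrow> 0 < k \<and> Suc k < length p \<and>
     (p ! (k - 1), p ! k) \<in> E \<and> (p ! Suc k, p ! k) \<in> E"

definition blocked :: "('v \<times> 'v) set \<Rightarrow> 'v set \<Rightarrow> 'v list \<Rightarrow> bool" where
  "blocked E C p \<longleftrightarrow> (\<exists>k. 0 < k \<and> Suc k < length p \<and>
     ((\<not> collider E p k \<and> p ! k \<in> C) \<or>
      (collider E p k \<and> p ! k \<notin> C \<and> descendants E (p ! k) \<inter> C = {})))"

definition d_separated :: "'v set \<Rightarrow> ('v \<times> 'v) set \<Rightarrow> 'v set \<Rightarrow> 'v set \<Rightarrow> 'v set \<Rightarrow> bool" where
  "d_separated V E X Y C \<longleftrightarrow>
     (\<forall>p. is_path V E p \<and> hd p \<in> X \<and> last p \<in> Y \<longrightarrow> blocked E C p)"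

text \<open>(S_i \<union> {V_i}, S_j \<union> {V_j}) is an IPA of (V_i, V_j).\<close>
definition is_IPA :: "'v set \<Rightarrow> ('v \<times> 'v) set \<Rightarrow> 'v \<Rightarrow> 'v \<Rightarrow> 'v set \<Rightarrow> 'v set \<Rightarrow> bool" where
  "is_IPA V E vi vj Si Sj \<longleftrightarrow>
     Si \<subseteq> V - {vi, vj} \<and> Sj \<subseteq> V - {vi, vj} \<and>
     (\<exists>C. C \<subseteq> V \<and> d_separated V E (insert vi Si) (insert vj Sj) C)"

end

theory Submission
  imports Defs
begin

definition walkb :: "('v \<times> 'v) set \<Rightarrow> 'v list \<Rightarrow> bool" where
  "walkb E p \<longleftrightarrow> (\<forall>k. Suc k < length p \<longrightarrow> (p ! Suc k, p ! k) \<in> E)"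

lemma walk_exists:
  assumes "(a, b) \<in> E\<^sup>*"
  shows "\<exists>p. p \<noteq> [] \<and> hd p = b \<and> last p = a \<and> walkb E p"
  using assms
proof (induction rule: rtrancl_induct)
  case base
  then show ?case by (rule exI[of _ "[a]"]) (simp add: walkb_def)
next
  case (step y z)
  then obtain p where p: "p \<noteq> []" "hd p = y" "last p = a" "walkb E p" by blast
  have "walkb E (z # p)"
    unfolding walkb_def
  proof (intro allI impI)
    fix k assume k: "Suc k < length (z # p)"
    show "((z # p) ! Suc k, (z # p) ! k) \<in> E"
    proof (cases k)
      case 0 then show ?thesis using p step by (simp add: hd_conv_nth)
    next
      case (Suc m) then show ?thesis using p(4) k by (simp add: walkb_def)
    qed
  qed
  then show ?case using p by (intro exI[of _ "z # p"]) auto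
qed

lemma walk_chain:
  assumes "walkb E p" "i \<le> j" "j < length p"
  shows "(p ! j, p ! i) \<in> E\<^sup>*"
  using assms(2,3)
proof (induction j)
  case 0 then show ?case by simp
next
  case (Suc j)
  show ?case
  proof (cases "i = Suc j")
    case True then show ?thesis by simp
  next
    case False
    then have "(p ! j, p ! i) \<in> E\<^sup>*" using Suc by simp
    moreover have "(p ! Suc j, p ! j) \<in> E" using assms(1) Suc.prems by (simp add: walkb_def)
    ultimately show ?thesis by (meson converse_rtrancl_into_rtrancl)
  qed
qed

lemma walk_chain_strict:
  assumes "walkb E p" "i < j" "j < length p"
  shows "(p ! j, p ! i) \<in> E\<^sup>+"
proof -
  have "(p ! j, p ! Suc i) \<in> E\<^sup>*" using walk_chain[OF assms(1)] assms by simp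
  moreover have "(p ! Suc i, p ! i) \<in> E" using assms by (simp add: walkb_def)
  ultimately show ?thesis by (meson rtrancl_into_trancl1)
qed

lemma walk_distinct:
  assumes "\<forall>v. (v, v) \<notin> E\<^sup>+" "walkb E p"
  shows "distinct p"
  unfolding distinct_conv_nth
proof (intro allI impI)
  fix i j assume h: "i < length p" "j < length p" "i \<noteq> j"
  show "p ! i \<noteq> p ! j"
  proof (cases "i < j")
    case True then show ?thesis using walk_chain_strict[OF assms(2) True h(2)] assms(1) by metis
  next
    case False then have "j < i" using h by simp
    then show ?thesis using walk_chain_strict[OF assms(2) _ h(1)] assms(1) by metis
  qed
qed

lemma blocked_rev:
  assumes "blocked E C (rev p)"
  shows "blocked E C p"
proof -
  obtain k where k: "0 < k" "Suc k < length p"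
    "(\<not> collider E (rev p) k \<and> rev p ! k \<in> C) \<or>
     (collider E (rev p) k \<and> rev p ! k \<notin> C \<and> descendants E (rev p ! k) \<inter> C = {})"
    using assms unfolding blocked_def by auto
  define k' where "k' = length p - Suc k"
  have k': "0 < k'" "Suc k' < length p" using k unfolding k'_def by auto
  have e1: "rev p ! k = p ! k'" using k by (simp add: rev_nth k'_def)
  have e2: "rev p ! (k - 1) = p ! Suc k'" using k
    by (simp add: rev_nth k'_def Suc_diff_Suc)
  have e3: "rev p ! Suc k = p ! (k' - 1)" using k
    by (simp add: rev_nth k'_def)
  have "collider E (rev p) k \<longleftrightarrow> collider E p k'"
    using k k' e1 e2 e3 unfolding collider_def by auto
  then show ?thesis unfolding blocked_def using k k' e1 by metis
qed

lemma path_rev: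
  assumes "is_path V E p" shows "is_path V E (rev p)"
  unfolding is_path_def
proof (intro conjI allI impI)
  show "rev p \<noteq> []" "distinct (rev p)" "set (rev p) \<subseteq> V" using assms by (auto simp: is_path_def)
  fix k assume k: "Suc k < length (rev p)"
  define k' where "k' = length p - Suc (Suc k)"
  have "rev p ! k = p ! Suc k'" "rev p ! Suc k = p ! k'" using k
    by (simp_all add: rev_nth k'_def Suc_diff_Suc)
  moreover have "adjacent E (p ! k') (p ! Suc k')" using assms k unfolding is_path_def k'_def by auto
  ultimately show "adjacent E (rev p ! k) (rev p ! Suc k)" by (auto simp: adjacent_def)
qed

lemma dsep_sym:
  assumes "d_separated V E X Y C" shows "d_separated V E Y X C"
  unfolding d_separated_def
proof (intro allI impI)
  fix p assume h: "is_path V E p \<and> hd p \<in> Y \<and> last p \<in> X"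
  then have "p \<noteq> []" by (simp add: is_path_def)
  then have "is_path V E (rev p) \<and> hd (rev p) \<in> X \<and> last (rev p) \<in> Y"
    using h path_rev[of V E p] by (simp add: hd_rev last_rev)
  then show "blocked E C p" using assms blocked_rev unfolding d_separated_def by blast
qed

lemma core:
  assumes dag: "dag V E" and vij: "vi \<noteq> vj"
    and e1: "(vi, c) \<in> E" and e2: "(vj, c) \<in> E" and cw: "(c, w) \<in> E\<^sup>*"
    and X: "w \<in> X" "vi \<in> X" and Y: "vj \<in> Y"
    and ds: "d_separated V E X Y C"
  shows False
proof -
  have ac: "\<forall>v. (v, v) \<notin> E\<^sup>+" and EV: "E \<subseteq> V \<times> V" using dag by (auto simp: dag_def)
  have cvi: "c \<noteq> vi" "c \<noteq> vj" using e1 e2 ac by auto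
  show False
  proof (cases "c \<in> C \<or> descendants E c \<inter> C \<noteq> {}")
    case True
    define p where "p = [vi, c, vj]"
    have "is_path V E p" unfolding is_path_def p_def
    proof (intro conjI allI impI)
      show "distinct [vi, c, vj]" using cvi vij by auto
      show "set [vi, c, vj] \<subseteq> V" using e1 e2 EV by auto
      fix k assume "Suc k < length [vi, c, vj]"
      then have "k = 0 \<or> k = 1" by auto
      then show "adjacent E ([vi, c, vj] ! k) ([vi, c, vj] ! Suc k)"
        using e1 e2 by (auto simp: adjacent_def)
    qed simp
    moreover have "\<not> blocked E C p"
    proof
      assume "blocked E C p"
      then obtain k where k: "0 < k" "Suc k < 3"
        "(\<not> collider E p k \<and> p ! k \<in> C) \<or>
         (collider E p k \<and> p ! k \<notin> C \<and> descendants E (p ! k) \<inter> C = {})"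
        unfolding blocked_def p_def by auto
      then have k1: "k = 1" by auto
      have "collider E p 1" using e1 e2 by (simp add: collider_def p_def)
      moreover have "p ! 1 = c" by (simp add: p_def)
      ultimately show False using k(3) True unfolding k1 by auto
    qed
    ultimately show False using ds X Y unfolding d_separated_def p_def by auto
  next
    case False
    obtain q where q: "q \<noteq> []" "hd q = w" "last q = c" "walkb E q"
      using walk_exists[OF cw] by blast
    define p where "p = q @ [vj]"
    have lq: "q ! (length q - 1) = c" using q by (simp add: last_conv_nth)
    have wp: "walkb E p" unfolding walkb_def
    proof (intro allI impI)
      fix k assume k: "Suc k < length p"
      show "(p ! Suc k, p ! k) \<in> E"
      proof (cases "Suc k < length q")
        case True then show ?thesis using q(4) by (simp add: p_def nth_append walkb_def)
      next
        case False then have "k = length q - 1" using k q by (auto simp: p_def)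
        then show ?thesis using lq e2 q by (simp add: p_def nth_append)
      qed
    qed
    have dp: "distinct p" using walk_distinct[OF ac wp] .
    have lp: "length p \<ge> 2" using q by (cases q) (simp_all add: p_def)
    have inV: "set p \<subseteq> V"
    proof
      fix x assume "x \<in> set p"
      then obtain k where k: "k < length p" "x = p ! k" by (metis in_set_conv_nth)
      show "x \<in> V"
      proof (cases "Suc k < length p")
        case True then have "(p ! Suc k, p ! k) \<in> E" using wp unfolding walkb_def by blast
        then show ?thesis using EV k by blast
      next
        case False then have "k \<noteq> 0" using lp k by auto
        then have "Suc (k - 1) < length p" "Suc (k - 1) = k" using k by auto
        then have "(p ! k, p ! (k - 1)) \<in> E" using wp unfolding walkb_def by metis
        then show ?thesis using EV k by blast
      qed
    qed
    have path: "is_path V E p" unfolding is_path_def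
    proof (intro conjI allI impI)
      show "p \<noteq> []" by (simp add: p_def)
      fix k assume "Suc k < length p"
      then show "adjacent E (p ! k) (p ! Suc k)" using wp unfolding walkb_def adjacent_def by blast
    qed (use dp inV in auto)
    have hl: "hd p = w" "last p = vj" using q by (auto simp: p_def)
    have "\<not> blocked E C p"
    proof
      assume "blocked E C p"
      then obtain k where k: "0 < k" "Suc k < length p"
        "(\<not> collider E p k \<and> p ! k \<in> C) \<or>
         (collider E p k \<and> p ! k \<notin> C \<and> descendants E (p ! k) \<inter> C = {})"
        unfolding blocked_def by auto
      have kq: "k < length q" using k by (simp add: p_def)
      have pk: "p ! k = q ! k" using kq by (simp add: p_def nth_append)
      have "(c, q ! k) \<in> E\<^sup>*" using walk_chain[OF q(4), of k "length q - 1"] kq lq by simp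
      then have "q ! k = c \<or> q ! k \<in> descendants E c"
        by (auto simp: descendants_def rtrancl_eq_or_trancl)
      then have nC: "p ! k \<notin> C" using False pk by auto
      have "Suc (k - 1) < length p" "Suc (k - 1) = k" using k by auto
      then have "(p ! k, p ! (k - 1)) \<in> E" using wp unfolding walkb_def by metis
      then have "\<not> collider E p k" using ac unfolding collider_def
        by (meson trancl.r_into_trancl trancl_into_trancl)
      then show False using k nC by auto
    qed
    then show False using ds path hl X Y unfolding d_separated_def by auto
  qed
qed

theorem lemma5:
  fixes V :: "'v set" and E :: "('v \<times> 'v) set" and vi vj :: 'v and Si Sj :: "'v set"
  assumes "dag V E"
    and "vi \<in> V" and "vj \<in> V" and "vi \<noteq> vj"
    and "\<not> adjacent E vi vj"
    and "is_IPA V E vi vj Si Sj"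
  shows "immoral_descendants E vi vj \<inter> insert vi Si = {} \<and>
         immoral_descendants E vi vj \<inter> insert vj Sj = {}"
proof -
  obtain C where ds: "d_separated V E (insert vi Si) (insert vj Sj) C"
    using assms(6) unfolding is_IPA_def by blast
  have ds': "d_separated V E (insert vj Sj) (insert vi Si) C" using dsep_sym[OF ds] .
  have mem: "\<exists>c. (vi, c) \<in> E \<and> (vj, c) \<in> E \<and> (c, w) \<in> E\<^sup>*"
    if "w \<in> immoral_descendants E vi vj" for w
    using that unfolding immoral_descendants_def common_children_def children_def
      descendants_set_def descendants_def by (auto dest: trancl_into_rtrancl)
  show ?thesis
  proof (intro conjI equalityI subsetI)
    fix w assume "w \<in> immoral_descendants E vi vj \<inter> insert vi Si"
    then obtain c where "(vi, c) \<in> E" "(vj, c) \<in> E" "(c, w) \<in> E\<^sup>*" "w \<in> insert vi Si"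
      using mem by blast
    then show "w \<in> {}" using core[OF assms(1) assms(4) _ _ _ _ _ _ ds] by blast
  next
    fix w assume "w \<in> immoral_descendants E vi vj \<inter> insert vj Sj"
    then obtain c where "(vi, c) \<in> E" "(vj, c) \<in> E" "(c, w) \<in> E\<^sup>*" "w \<in> insert vj Sj"
      using mem by blast
    then show "w \<in> {}" using core[OF assms(1) assms(4)[symmetric] _ _ _ _ _ _ ds'] by blast
  qed auto
qed

end
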